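(* The coupled relation $(\mathrm{Id},\approx^n_A)$ is a call-by-name coupled logical bisimulation, where $\mathrm{Id}$ is the identity relation on $\Lambda^\bullet$. Conversely, if $(\mathcal{R}',\mathcal{R})$ is a call-by-name coupled logical bisimulation with $\mathcal{R}'\subseteq\mathcal{R}\cap\mathrm{Id}$, then $\mathcal{R}$ is an applicative bisimulation; in particular $\approx^n_2$ is an applicative bisimulation.
   Context: $\Lambda^\bullet$ is the set of closed $\lambda$-terms. Contexts are generated by $C::=x\mid[\cdot]\mid C\,C\mid\lambda x.C$, possibly with several holes numbered left to right; $C[\widetilde M]$ fills the $i$-th hole with $M_i$. For $\mathcal{R}\subseteq\Lambda^\bullet\times\Lambda^\bullet$, $\mathcal{R}^\star=\{(C[\widetilde M],C[\widetilde N]) : C\text{ a context},\ M_i\,\mathcal{R}\,N_i\ \forall i,\ C[\widetilde M],C[\widetilde N]\in\Lambda^\bullet\}$. Call-by-name reduction on closed terms: $MN\longrightarrow M'N$ if $M\longrightarrow M'$, and $(\lambda x.P)N\longrightarrow P[N/x]$; $\Longrightarrow$ is its reflexive transitive closure. A relation $\mathcal{R}\subseteq\Lambda^\bullet\times\Lambda^\bullet$ is an applicative bisimulation if $M\,\mathcal{R}\,N$ implies: whenever $M\Longrightarrow\lambda x.P$, then $N\Longrightarrow\lambda x.Q$ for some $Q$ with $P[W/x]\,\mathcal{R}\,Q[W/x]$ for all $W\in\Lambda^\bullet$, and conversely with $M,N$ exchanged; $\approx^n_A$ is the union of all applicative bisimulations. A coupled relation is a pair $(\mathcal{R}_1,\mathcal{R}_2)$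 of relations on $\Lambda^\bullet$ with $\mathcal{R}_1\subseteq\mathcal{R}_2$. It is a (call-by-name) coupled logical bisimulation if whenever $M\,\mathcal{R}_2\,N$: (1) if $M\longrightarrow M'$ then there is $N'$ with $N\Longrightarrow N'$ and $M'\,\mathcal{R}_2\,N'$; (2) if $M=\lambda x.M'$ then $N\Longrightarrow\lambda x.N'$ for some $N'$ and for all $P,Q\in\Lambda^\bullet$ with $P\,\mathcal{R}_1^\star\,Q$, $M'[P/x]\,\mathcal{R}_2\,N'[Q/x]$; (3) the converses of (1),(2) with $M$ and $N$ exchanged. $(\approx^n_1,\approx^n_2)$ is the componentwise union of all such bisimulations. *)

theory Defs
  imports Main
begin

section \<open>Pure lambda-terms with de Bruijn indices (alpha-equivalence is syntactic equality)\<close>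

datatype lterm = Var nat | App lterm lterm | Lam lterm

fun closed_at :: "nat \<Rightarrow> lterm \<Rightarrow> bool" where
  "closed_at k (Var i) = (i < k)"
| "closed_at k (App s t) = (closed_at k s \<and> closed_at k t)"
| "closed_at k (Lam t) = closed_at (Suc k) t"

definition closed :: "lterm \<Rightarrow> bool" where
  "closed t = closed_at 0 t"

definition Closed :: "lterm set" where
  "Closed = {t. closed t}"

text \<open>Substitution of a term W for index k (depth-aware). W is always a closed term
  in this development, so no lifting of W is needed.\<close>
fun subst :: "lterm \<Rightarrow> nat \<Rightarrow> lterm \<Rightarrow> lterm" where
  "subst (Var i) k W = (if i < k then Var i else if i = k then W else Var (i - 1))"
| "subst (App s t) k W = App (subst s k W) (subst t k W)"
| "subst (Lam t) k W = Lam (subst t (Suc k) W)"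

text \<open>P[W/x] where Lam P is the abstraction binding x.\<close>
abbreviation inst :: "lterm \<Rightarrow> lterm \<Rightarrow> lterm" where
  "inst P W \<equiv> subst P 0 W"

datatype ctx = CVar nat | Hole | CApp ctx ctx | CLam ctx

fun holes :: "ctx \<Rightarrow> nat" where
  "holes (CVar i) = 0"
| "holes Hole = 1"
| "holes (CApp C1 C2) = holes C1 + holes C2"
| "holes (CLam C) = holes C"

fun fill :: "ctx \<Rightarrow> lterm list \<Rightarrow> lterm" where
  "fill (CVar i) Ms = Var i"
| "fill Hole Ms = hd Ms"
| "fill (CApp C1 C2) Ms = App (fill C1 (take (holes C1) Ms)) (fill C2 (drop (holes C1) Ms))"
| "fill (CLam C) Ms = Lam (fill C Ms)"

definition ctx_closure :: "(lterm \<times> lterm) set \<Rightarrow> (lterm \<times> lterm) set" where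
  "ctx_closure R = {(fill C Ms, fill C Ns) | C Ms Ns.
      length Ms = holes C \<and> length Ns = holes C \<and>
      list_all2 (\<lambda>M N. (M, N) \<in> R) Ms Ns \<and>
      closed (fill C Ms) \<and> closed (fill C Ns)}"

inductive cbn :: "lterm \<Rightarrow> lterm \<Rightarrow> bool" where
  cbn_app: "cbn M M' \<Longrightarrow> cbn (App M N) (App M' N)"
| cbn_beta: "cbn (App (Lam P) N) (inst P N)"

abbreviation cbn_star :: "lterm \<Rightarrow> lterm \<Rightarrow> bool" where
  "cbn_star \<equiv> cbn\<^sup>*\<^sup>*"

definition app_sim_step :: "(lterm \<times> lterm) set \<Rightarrow> lterm \<Rightarrow> lterm \<Rightarrow> bool" where
  "app_sim_step R M N \<longleftrightarrow>
     (\<forall>P. cbn_star M (Lam P) \<longrightarrow>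
        (\<exists>Q. cbn_star N (Lam Q) \<and> (\<forall>W. closed W \<longrightarrow> (inst P W, inst Q W) \<in> R)))"

definition app_bisim :: "(lterm \<times> lterm) set \<Rightarrow> bool" where
  "app_bisim R \<longleftrightarrow> R \<subseteq> Closed \<times> Closed \<and>
     (\<forall>M N. (M, N) \<in> R \<longrightarrow> app_sim_step R M N \<and> app_sim_step (R\<inverse>) N M)"

definition app_bisimilar :: "(lterm \<times> lterm) set" where
  "app_bisimilar = \<Union>{R. app_bisim R}"

definition clb_step :: "(lterm \<times> lterm) set \<Rightarrow> (lterm \<times> lterm) set \<Rightarrow> lterm \<Rightarrow> lterm \<Rightarrow> bool" where
  "clb_step R1 R2 M N \<longleftrightarrow>
     (\<forall>M'. cbn M M' \<longrightarrow> (\<exists>N'. cbn_star N N' \<and> (M', N') \<in> R2)) \<and>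
     (\<forall>M'. M = Lam M' \<longrightarrow>
        (\<exists>N'. cbn_star N (Lam N') \<and>
          (\<forall>P Q. (P, Q) \<in> ctx_closure R1 \<longrightarrow> (inst M' P, inst N' Q) \<in> R2)))"

text \<open>A coupled relation (R1, R2): relations on closed terms with R1 \<subseteq> R2.
  Clause (3) is obtained by applying the step to the converse relations.\<close>
definition coupled_logical_bisim :: "(lterm \<times> lterm) set \<Rightarrow> (lterm \<times> lterm) set \<Rightarrow> bool" where
  "coupled_logical_bisim R1 R2 \<longleftrightarrow>
     R1 \<subseteq> R2 \<and> R2 \<subseteq> Closed \<times> Closed \<and>
     (\<forall>M N. (M, N) \<in> R2 \<longrightarrow> clb_step R1 R2 M N \<and> clb_step (R1\<inverse>) (R2\<inverse>) N M)"

definition clb_approx1 :: "(lterm \<times> lterm) set" where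
  "clb_approx1 = \<Union>{R1. \<exists>R2. coupled_logical_bisim R1 R2}"

definition clb_approx2 :: "(lterm \<times> lterm) set" where
  "clb_approx2 = \<Union>{R2. \<exists>R1. coupled_logical_bisim R1 R2}"

end

theory Submission
  imports Defs
begin

lemma closed_at_mono: "closed_at k t \<Longrightarrow> k \<le> m \<Longrightarrow> closed_at m t"
  by (induction t arbitrary: k m) fastforce+

lemma closed_subst: "closed_at (Suc k) t \<Longrightarrow> closed W \<Longrightarrow> closed_at k (subst t k W)"
  by (induction t arbitrary: k) (auto simp: closed_def intro: closed_at_mono)

lemma closed_inst: "closed (Lam P) \<Longrightarrow> closed W \<Longrightarrow> closed (inst P W)"
  using closed_subst[of 0 P W] by (simp add: closed_def)

lemma cbn_closed: "cbn M M' \<Longrightarrow> closed M \<Longrightarrow> closed M'"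
  by (induction rule: cbn.induct) (auto simp: closed_def intro: closed_subst[of 0, simplified closed_def])

lemma cbn_Lam: "\<not> cbn (Lam P) X"
  by (auto elim: cbn.cases)

lemma cbn_det: "cbn M A \<Longrightarrow> cbn M B \<Longrightarrow> A = B"
proof (induction arbitrary: B rule: cbn.induct)
  case (cbn_app M M' N)
  from cbn_app.prems show ?case
  proof (cases rule: cbn.cases)
    case cbn_app
    then show ?thesis using cbn_app.IH by simp
  next
    case cbn_beta
    then show ?thesis using cbn_app.hyps cbn_Lam by simp
  qed
next
  case (cbn_beta P N)
  from cbn_beta.prems show ?case
  proof (cases rule: cbn.cases)
    case cbn_app
    then show ?thesis using cbn_Lam by simp
  next
    case cbn_beta
    then show ?thesis by simp
  qed
qed

lemma cbn_star_Lam_step: "cbn_star M (Lam P) \<Longrightarrow> cbn M M' \<Longrightarrow> cbn_star M' (Lam P)"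
  by (erule converse_rtranclpE) (auto simp: cbn_Lam dest: cbn_det)

fun ctx_of :: "lterm \<Rightarrow> ctx" where
  "ctx_of (Var i) = CVar i"
| "ctx_of (App s t) = CApp (ctx_of s) (ctx_of t)"
| "ctx_of (Lam t) = CLam (ctx_of t)"

lemma holes_ctx_of: "holes (ctx_of t) = 0"
  by (induction t) auto

lemma fill_ctx_of: "fill (ctx_of t) [] = t"
  by (induction t) (auto simp: holes_ctx_of)

lemma closed_in_ctx_closure: "closed W \<Longrightarrow> (W, W) \<in> ctx_closure R"
  unfolding ctx_closure_def
  by (rule CollectI, rule exI[of _ "ctx_of W"], rule exI[of _ "[]"], rule exI[of _ "[]"])
     (simp add: holes_ctx_of fill_ctx_of)

lemma ctx_closure_Id: "(P, Q) \<in> ctx_closure (Id_on Closed) \<Longrightarrow> P = Q \<and> closed P"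
proof -
  assume "(P, Q) \<in> ctx_closure (Id_on Closed)"
  then obtain C Ms Ns where h: "P = fill C Ms" "Q = fill C Ns"
    "list_all2 (\<lambda>M N. (M, N) \<in> Id_on Closed) Ms Ns" "closed (fill C Ms)"
    unfolding ctx_closure_def by blast
  from h(3) have "list_all2 (=) Ms Ns" by (rule list_all2_mono) auto
  then have "Ms = Ns" by (simp add: list_all2_eq)
  with h show ?thesis by simp
qed

lemma app_sim_step_mono: "R \<subseteq> S \<Longrightarrow> app_sim_step R M N \<Longrightarrow> app_sim_step S M N"
  unfolding app_sim_step_def by blast

lemma app_bisim_Union: "(\<forall>R\<in>F. app_bisim R) \<Longrightarrow> app_bisim (\<Union>F)"
  unfolding app_bisim_def
proof (intro conjI allI impI)
  assume a: "\<forall>R\<in>F. R \<subseteq> Closed \<times> Closed \<and>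
      (\<forall>M N. (M, N) \<in> R \<longrightarrow> app_sim_step R M N \<and> app_sim_step (R\<inverse>) N M)"
  then show "\<Union>F \<subseteq> Closed \<times> Closed" by blast
  fix M N assume "(M, N) \<in> \<Union>F"
  then obtain R where R: "R \<in> F" "(M, N) \<in> R" by blast
  with a have s: "app_sim_step R M N" "app_sim_step (R\<inverse>) N M" by auto
  have "R \<subseteq> \<Union>F" "R\<inverse> \<subseteq> (\<Union>F)\<inverse>" using R(1) by auto
  with s show "app_sim_step (\<Union>F) M N" "app_sim_step ((\<Union>F)\<inverse>) N M"
    using app_sim_step_mono by blast+
qed

lemma app_bisim_bisimilar: "app_bisim app_bisimilar"
  unfolding app_bisimilar_def by (rule app_bisim_Union) auto

lemma app_bisim_le: "app_bisim R \<Longrightarrow> R \<subseteq> app_bisimilar"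
  unfolding app_bisimilar_def by blast

lemma clb_app:
  assumes h: "\<forall>M N. (M, N) \<in> R2 \<longrightarrow> clb_step R1 R2 M N"
    and mn: "(M, N) \<in> R2"
  shows "app_sim_step R2 M N"
  unfolding app_sim_step_def
proof (intro allI impI)
  fix P assume "cbn_star M (Lam P)"
  then have "\<forall>N. (M, N) \<in> R2 \<longrightarrow>
     (\<exists>Q. cbn_star N (Lam Q) \<and> (\<forall>W. closed W \<longrightarrow> (inst P W, inst Q W) \<in> R2))"
  proof (induction rule: converse_rtranclp_induct)
    case base
    show ?case
    proof (intro allI impI)
      fix N assume "(Lam P, N) \<in> R2"
      with h have "clb_step R1 R2 (Lam P) N" by blast
      then have "\<exists>N'. cbn_star N (Lam N') \<and>
        (\<forall>P0 Q0. (P0, Q0) \<in> ctx_closure R1 \<longrightarrow> (inst P P0, inst N' Q0) \<in> R2)"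
        unfolding clb_step_def by simp
      then obtain N' where a: "cbn_star N (Lam N')"
        "\<forall>P0 Q0. (P0, Q0) \<in> ctx_closure R1 \<longrightarrow> (inst P P0, inst N' Q0) \<in> R2"
        by blast
      have "\<forall>W. closed W \<longrightarrow> (inst P W, inst N' W) \<in> R2"
        using a(2) closed_in_ctx_closure by simp
      with a(1) show "\<exists>Q. cbn_star N (Lam Q) \<and> (\<forall>W. closed W \<longrightarrow> (inst P W, inst Q W) \<in> R2)"
        by blast
    qed
  next
    case (step y z)
    show ?case
    proof (intro allI impI)
      fix N assume "(y, N) \<in> R2"
      with h have "clb_step R1 R2 y N" by blast
      then have "\<forall>M'. cbn y M' \<longrightarrow> (\<exists>N'. cbn_star N N' \<and> (M', N') \<in> R2)"
        unfolding clb_step_def by simp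
      with step(1) obtain N' where "cbn_star N N'" "(z, N') \<in> R2"
        by blast
      with step(3) show "\<exists>Q. cbn_star N (Lam Q) \<and> (\<forall>W. closed W \<longrightarrow> (inst P W, inst Q W) \<in> R2)"
        by (meson rtranclp_trans)
    qed
  qed
  with mn show "\<exists>Q. cbn_star N (Lam Q) \<and> (\<forall>W. closed W \<longrightarrow> (inst P W, inst Q W) \<in> R2)"
    by blast
qed

lemma clb_app_bisim: "coupled_logical_bisim R' R \<Longrightarrow> app_bisim R"
  unfolding app_bisim_def
proof (intro conjI allI impI)
  assume c: "coupled_logical_bisim R' R"
  then show "R \<subseteq> Closed \<times> Closed" unfolding coupled_logical_bisim_def by blast
  fix M N assume mn: "(M, N) \<in> R"
  have h1: "\<forall>M N. (M, N) \<in> R \<longrightarrow> clb_step R' R M N"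
    using c unfolding coupled_logical_bisim_def by blast
  have h2: "\<forall>M N. (M, N) \<in> R\<inverse> \<longrightarrow> clb_step (R'\<inverse>) (R\<inverse>) M N"
    using c unfolding coupled_logical_bisim_def by blast
  show "app_sim_step R M N" using clb_app[OF h1 mn] .
  show "app_sim_step (R\<inverse>) N M" using clb_app[OF h2] mn by blast
qed

lemma star_closed: "cbn_star M M' \<Longrightarrow> closed M \<Longrightarrow> closed M'"
  by (induction rule: rtranclp_induct) (auto intro: cbn_closed)

lemma Id_app_bisim: "app_bisim (Id_on Closed)"
proof -
  have "app_sim_step (Id_on Closed) M M" if "closed M" for M
    unfolding app_sim_step_def
  proof (intro allI impI)
    fix P assume "cbn_star M (Lam P)"
    then have "closed (Lam P)" using star_closed that by blast
    then have "\<forall>W. closed W \<longrightarrow> (inst P W, inst P W) \<in> Id_on Closed"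
      using closed_inst unfolding Closed_def by blast
    with \<open>cbn_star M (Lam P)\<close>
    show "\<exists>Q. cbn_star M (Lam Q) \<and> (\<forall>W. closed W \<longrightarrow> (inst P W, inst Q W) \<in> Id_on Closed)"
      by blast
  qed
  then show ?thesis unfolding app_bisim_def Closed_def by auto
qed

definition Bx :: "(lterm \<times> lterm) set" where
  "Bx = app_bisimilar \<union> {(M', N) | M M' N. cbn M M' \<and> (M, N) \<in> app_bisimilar}
        \<union> {(M, N') | M N N'. cbn N N' \<and> (M, N) \<in> app_bisimilar}"

lemma Bx_app_bisim: "app_bisim Bx"
proof -
  let ?B = app_bisimilar
  have B: "?B \<subseteq> Closed \<times> Closed" "\<And>M N. (M, N) \<in> ?B \<Longrightarrow> app_sim_step ?B M N \<and> app_sim_step (?B\<inverse>) N M"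
    using app_bisim_bisimilar unfolding app_bisim_def by blast+
  have sub: "?B \<subseteq> Bx" "?B\<inverse> \<subseteq> Bx\<inverse>" unfolding Bx_def by auto
  show ?thesis
    unfolding app_bisim_def
  proof (intro conjI)
    show "Bx \<subseteq> Closed \<times> Closed"
      using B(1) unfolding Bx_def Closed_def by (auto intro: cbn_closed)
    show "\<forall>M N. (M, N) \<in> Bx \<longrightarrow> app_sim_step Bx M N \<and> app_sim_step (Bx\<inverse>) N M"
    proof (intro allI impI)
    fix M N assume "(M, N) \<in> Bx"
    then consider "(M, N) \<in> ?B"
      | M0 where "cbn M0 M" "(M0, N) \<in> ?B"
      | N0 where "cbn N0 N" "(M, N0) \<in> ?B"
      unfolding Bx_def by blast
    then show "app_sim_step Bx M N \<and> app_sim_step (Bx\<inverse>) N M"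
    proof cases
      case 1
      then show ?thesis using B(2) sub app_sim_step_mono by blast
    next
      case 2
      from B(2)[OF 2(2)] have s: "app_sim_step ?B M0 N" "app_sim_step (?B\<inverse>) N M0" by auto
      have "app_sim_step ?B M N"
        using s(1) 2(1) unfolding app_sim_step_def by (meson converse_rtranclp_into_rtranclp)
      moreover have "app_sim_step (?B\<inverse>) N M"
        using s(2) 2(1) unfolding app_sim_step_def by (meson cbn_star_Lam_step)
      ultimately show ?thesis using sub app_sim_step_mono by blast
    next
      case 3
      from B(2)[OF 3(2)] have s: "app_sim_step ?B M N0" "app_sim_step (?B\<inverse>) N0 M" by auto
      have "app_sim_step ?B M N"
        using s(1) 3(1) unfolding app_sim_step_def by (meson cbn_star_Lam_step)
      moreover have "app_sim_step (?B\<inverse>) N M"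
        using s(2) 3(1) unfolding app_sim_step_def by (meson converse_rtranclp_into_rtranclp)
      ultimately show ?thesis using sub app_sim_step_mono by blast
    qed
    qed
  qed
qed

lemma part1: "coupled_logical_bisim (Id_on Closed) app_bisimilar"
proof -
  let ?B = app_bisimilar
  have B: "?B \<subseteq> Closed \<times> Closed" "\<And>M N. (M, N) \<in> ?B \<Longrightarrow> app_sim_step ?B M N \<and> app_sim_step (?B\<inverse>) N M"
    using app_bisim_bisimilar unfolding app_bisim_def by blast+
  have BxB: "Bx \<subseteq> ?B" using app_bisim_le[OF Bx_app_bisim] .
  have r1: "(M', N) \<in> ?B" if "cbn M M'" "(M, N) \<in> ?B" for M M' N
    using that BxB unfolding Bx_def by blast
  have r2: "(M, N') \<in> ?B" if "cbn N N'" "(M, N) \<in> ?B" for M N N'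
    using that BxB unfolding Bx_def by blast
  have cc: "(P, Q) \<in> ctx_closure (Id_on Closed) \<Longrightarrow> P = Q \<and> closed P" for P Q
    using ctx_closure_Id by blast
  have inv: "(Id_on Closed)\<inverse> = Id_on Closed" by auto
  show ?thesis
    unfolding coupled_logical_bisim_def
  proof (intro conjI allI impI)
    show "Id_on Closed \<subseteq> ?B" using app_bisim_le[OF Id_app_bisim] .
    show "?B \<subseteq> Closed \<times> Closed" by (rule B(1))
    fix M N assume mn: "(M, N) \<in> ?B"
    from B(2)[OF mn] have s: "app_sim_step ?B M N" "app_sim_step (?B\<inverse>) N M" by auto
    show "clb_step (Id_on Closed) ?B M N"
      unfolding clb_step_def
    proof (intro conjI allI impI)
      fix M' assume "cbn M M'"
      then show "\<exists>N'. cbn_star N N' \<and> (M', N') \<in> ?B" using r1 mn by blast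
    next
      fix M' assume "M = Lam M'"
      with s(1) obtain Q where "cbn_star N (Lam Q)" "\<forall>W. closed W \<longrightarrow> (inst M' W, inst Q W) \<in> ?B"
        unfolding app_sim_step_def by blast
      then show "\<exists>N'. cbn_star N (Lam N') \<and> (\<forall>P Q. (P, Q) \<in> ctx_closure (Id_on Closed) \<longrightarrow> (inst M' P, inst N' Q) \<in> ?B)"
        using cc by metis
    qed
    show "clb_step ((Id_on Closed)\<inverse>) (?B\<inverse>) N M"
      unfolding clb_step_def inv
    proof (intro conjI allI impI)
      fix N' assume "cbn N N'"
      then show "\<exists>M'. cbn_star M M' \<and> (N', M') \<in> ?B\<inverse>" using r2 mn by blast
    next
      fix N' assume "N = Lam N'"
      with s(2) obtain Q where "cbn_star M (Lam Q)" "\<forall>W. closed W \<longrightarrow> (inst N' W, inst Q W) \<in> ?B\<inverse>"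
        unfolding app_sim_step_def by blast
      then show "\<exists>M'. cbn_star M (Lam M') \<and> (\<forall>P Q. (P, Q) \<in> ctx_closure (Id_on Closed) \<longrightarrow> (inst N' P, inst M' Q) \<in> ?B\<inverse>)"
        using cc by metis
    qed
  qed
qed

theorem mainTheorem9:
  shows "coupled_logical_bisim (Id_on Closed) app_bisimilar
     \<and> (\<forall>R' R. coupled_logical_bisim R' R \<and> R' \<subseteq> R \<inter> Id \<longrightarrow> app_bisim R)
     \<and> app_bisim clb_approx2"
proof (intro conjI allI impI)
  show "coupled_logical_bisim (Id_on Closed) app_bisimilar" by (rule part1)
  fix R' R assume "coupled_logical_bisim R' R \<and> R' \<subseteq> R \<inter> Id"
  then show "app_bisim R" using clb_app_bisim by blast
next
  show "app_bisim clb_approx2"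
    unfolding clb_approx2_def by (rule app_bisim_Union) (auto intro: clb_app_bisim)
qed

end
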